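(* Let $B\colon\mathbf{Set}\to\mathbf{Set}$ be a functor, $\Lambda$ a set, $(\tau_\lambda\colon B\mathbb{R}\to\mathbb{R})_{\lambda\in\Lambda}$ arbitrary functions, and $x\colon X\to BX$ a coalgebra. Every entourage of the logical uniformity of $x$ is an entourage of the bisimulation uniformity of $x$. In particular, for every formula $\varphi$, $[\![\varphi]\!]_x\colon X\to\mathbb{R}$ is uniformly continuous with respect to the bisimulation uniformity.
   Context: For a set $Y$ and a family $F$ of functions $Y\to\mathbb{R}$, let $\mathscr{U}(F)$ denote the coarsest uniformity on $Y$ making every $f\in F$ uniformly continuous into $\mathbb{R}$ with the Euclidean uniformity $\mathscr{U}_e$. Formulas: $\varphi::=1\mid\min(\varphi_1,\varphi_2)\mid r+\varphi\mid r\times\varphi\ (r\in\mathbb{R})\mid\heartsuit_\lambda\varphi$; semantics $[\![1]\!]=1$, $\min$ pointwise, $[\![r+\varphi]\!]=r+[\![\varphi]\!]$, $[\![r\times\varphi]\!]=r[\![\varphi]\!]$, $[\![\heartsuit_\lambda\varphi]\!]_x=\tau_\lambda\circ B[\![\varphi]\!]_x\circ x$. The logical uniformity of $x$ is $\mathscr{U}(\{[\![\varphi]\!]_x\mid\varphi\})$. For a uniformity $\mathscr{U}$ on $X$, let $\Phi(\mathscr{U})=\mathscr{U}(\{\tau_\lambda\circ Bh\circ x\mid\lambda\in\Lambda,\ h\colon(X,\mathscr{U})\to(\mathbb{R},\mathscr{U}_e)$ uniformly continuous$\})$. Uniformities on $X$ are ordered by $\mathscr{U}\sqsubseteq\mathscr{V}$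 iff $\mathscr{U}\supseteq\mathscr{V}$ (finer is smaller); the bisimulation uniformity is the $\sqsubseteq$-greatest fixed point of $\Phi$. *)

theory Defs
  imports "HOL-Analysis.Analysis"
begin

definition is_uniformity :: "('a \<times> 'a) set set \<Rightarrow> bool" where
  "is_uniformity U \<longleftrightarrow>
     UNIV \<in> U \<and>
     (\<forall>E\<in>U. Id \<subseteq> E) \<and>
     (\<forall>E\<in>U. \<forall>F. E \<subseteq> F \<longrightarrow> F \<in> U) \<and>
     (\<forall>E\<in>U. \<forall>F\<in>U. E \<inter> F \<in> U) \<and>
     (\<forall>E\<in>U. E\<inverse> \<in> U) \<and>
     (\<forall>E\<in>U. \<exists>D\<in>U. D O D \<subseteq> E)"

definition eucl_unif :: "(real \<times> real) set set" where
  "eucl_unif = {E. eventually (\<lambda>p. p \<in> E) (uniformity :: (real \<times> real) filter)}"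

definition unif_cont :: "('a \<Rightarrow> 'b) \<Rightarrow> ('a \<times> 'a) set set \<Rightarrow> ('b \<times> 'b) set set \<Rightarrow> bool" where
  "unif_cont f U V \<longleftrightarrow> (\<forall>E\<in>V. {(a, b). (f a, f b) \<in> E} \<in> U)"

definition coarsest_unif :: "('a \<Rightarrow> real) set \<Rightarrow> ('a \<times> 'a) set set" where
  "coarsest_unif F = (THE U. is_uniformity U \<and> (\<forall>f\<in>F. unif_cont f U eucl_unif) \<and>
      (\<forall>V. is_uniformity V \<and> (\<forall>f\<in>F. unif_cont f V eucl_unif) \<longrightarrow> U \<subseteq> V))"

text \<open>Formulas; the modality labels range over an index type, restricted to \<Lambda> below.\<close>
datatype 'l form =
    FOne
  | FMin "'l form" "'l form"
  | FPlus real "'l form"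
  | FTimes real "'l form"
  | FHeart 'l "'l form"

text \<open>The functor B enters only through BX = 'bx, BR = 'br and its action
  Bmap h : BX \<rightarrow> BR on maps h : X \<rightarrow> R.\<close>
primrec sem :: "('x \<Rightarrow> 'bx) \<Rightarrow> (('x \<Rightarrow> real) \<Rightarrow> 'bx \<Rightarrow> 'br) \<Rightarrow> ('l \<Rightarrow> 'br \<Rightarrow> real)
                \<Rightarrow> 'l form \<Rightarrow> 'x \<Rightarrow> real" where
  "sem c Bmap \<tau> FOne = (\<lambda>s. 1)"
| "sem c Bmap \<tau> (FMin \<phi> \<psi>) = (\<lambda>s. min (sem c Bmap \<tau> \<phi> s) (sem c Bmap \<tau> \<psi> s))"
| "sem c Bmap \<tau> (FPlus r \<phi>) = (\<lambda>s. r + sem c Bmap \<tau> \<phi> s)"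
| "sem c Bmap \<tau> (FTimes r \<phi>) = (\<lambda>s. r * sem c Bmap \<tau> \<phi> s)"
| "sem c Bmap \<tau> (FHeart l \<phi>) = (\<lambda>s. \<tau> l (Bmap (sem c Bmap \<tau> \<phi>) (c s)))"

definition logical_unif :: "'l set \<Rightarrow> ('x \<Rightarrow> 'bx) \<Rightarrow> (('x \<Rightarrow> real) \<Rightarrow> 'bx \<Rightarrow> 'br)
      \<Rightarrow> ('l \<Rightarrow> 'br \<Rightarrow> real) \<Rightarrow> ('x \<times> 'x) set set" where
  "logical_unif Lam c Bmap \<tau> =
     coarsest_unif {sem c Bmap \<tau> \<phi> | \<phi>. set_form \<phi> \<subseteq> Lam}"

definition Phi :: "'l set \<Rightarrow> ('x \<Rightarrow> 'bx) \<Rightarrow> (('x \<Rightarrow> real) \<Rightarrow> 'bx \<Rightarrow> 'br)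
      \<Rightarrow> ('l \<Rightarrow> 'br \<Rightarrow> real) \<Rightarrow> ('x \<times> 'x) set set \<Rightarrow> ('x \<times> 'x) set set" where
  "Phi Lam c Bmap \<tau> U =
     coarsest_unif {(\<lambda>s. \<tau> l (Bmap h (c s))) | l h. l \<in> Lam \<and> unif_cont h U eucl_unif}"

text \<open>Order: U \<sqsubseteq> V iff U \<supseteq> V. The bisimulation uniformity is the
  \<sqsubseteq>-greatest fixed point of Phi among uniformities.\<close>
definition bisim_unif :: "'l set \<Rightarrow> ('x \<Rightarrow> 'bx) \<Rightarrow> (('x \<Rightarrow> real) \<Rightarrow> 'bx \<Rightarrow> 'br)
      \<Rightarrow> ('l \<Rightarrow> 'br \<Rightarrow> real) \<Rightarrow> ('x \<times> 'x) set set" where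
  "bisim_unif Lam c Bmap \<tau> =
     (THE U. is_uniformity U \<and> Phi Lam c Bmap \<tau> U = U \<and>
        (\<forall>V. is_uniformity V \<and> Phi Lam c Bmap \<tau> V = V \<longrightarrow> V \<supseteq> U))"

end

theory Submission
  imports Defs
begin

definition ent :: "('a \<Rightarrow> real) \<Rightarrow> real \<Rightarrow> ('a \<times> 'a) set" where
  "ent f e = {(a, b). dist (f a) (f b) < e}"

definition bset :: "(('a \<Rightarrow> real) \<times> real) set \<Rightarrow> ('a \<times> 'a) set" where
  "bset A = \<Inter> ((\<lambda>(f, e). ent f e) ` A)"

definition gen :: "('a \<Rightarrow> real) set \<Rightarrow> ('a \<times> 'a) set set" where
  "gen F = {E. \<exists>A. finite A \<and> A \<subseteq> F \<times> {0<..} \<and> bset A \<subseteq> E}"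

lemma eucl_unif_iff: "E \<in> eucl_unif \<longleftrightarrow> (\<exists>e>0. \<forall>x y. dist x y < e \<longrightarrow> (x, y) \<in> E)"
  unfolding eucl_unif_def by (simp add: eventually_uniformity_metric)

lemma unif_cont_iff:
  assumes "is_uniformity V"
  shows "unif_cont f V eucl_unif \<longleftrightarrow> (\<forall>e>0. ent f e \<in> V)"
proof
  assume "unif_cont f V eucl_unif"
  then have h: "\<forall>E\<in>eucl_unif. {(a, b). (f a, f b) \<in> E} \<in> V" unfolding unif_cont_def .
  show "\<forall>e>0. ent f e \<in> V"
  proof (intro allI impI)
    fix e :: real assume e: "e > 0"
    have "{(x, y). dist x y < e} \<in> eucl_unif" unfolding eucl_unif_iff
      using e by (intro exI[of _ e]) simp
    with h have "{(a, b). (f a, f b) \<in> {(x, y). dist x y < e}} \<in> V" by (rule bspec)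
    then show "ent f e \<in> V" by (simp add: ent_def)
  qed
next
  assume h: "\<forall>e>0. ent f e \<in> V"
  show "unif_cont f V eucl_unif"
    unfolding unif_cont_def
  proof
    fix E assume "E \<in> eucl_unif"
    then obtain e where e: "e > 0" "\<forall>x y. dist x y < e \<longrightarrow> (x, y) \<in> E"
      by (auto simp: eucl_unif_iff)
    have "ent f e \<subseteq> {(a, b). (f a, f b) \<in> E}" using e by (auto simp: ent_def)
    then show "{(a, b). (f a, f b) \<in> E} \<in> V"
      using h e assms unfolding is_uniformity_def by blast
  qed
qed

lemma bset_insert: "bset (insert (f, e) A) = ent f e \<inter> bset A"
  by (simp add: bset_def)

lemma bset_in:
  assumes V: "is_uniformity V" and fin: "finite A"
  shows "(\<forall>(f, e)\<in>A. e > 0 \<and> ent f e \<in> V) \<Longrightarrow> bset A \<in> V"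
  using fin
proof (induction A rule: finite_induct)
  case empty
  then show ?case using V by (simp add: bset_def is_uniformity_def)
next
  case (insert x A)
  obtain f e where x: "x = (f, e)" by force
  show ?case using insert V unfolding x bset_insert is_uniformity_def by auto
qed

lemma bset_mem:
  fixes A :: "(('a \<Rightarrow> real) \<times> real) set" and p :: "'a \<times> 'a"
  shows "(f, e) \<in> A \<Longrightarrow> p \<in> bset A \<Longrightarrow> p \<in> ent f e"
  unfolding bset_def by (drule InterD) (rule image_eqI[where x="(f, e)"], simp_all)

lemma bset_intro:
  fixes A :: "(('a \<Rightarrow> real) \<times> real) set" and p :: "'a \<times> 'a"
  shows "(\<And>f e. (f, e) \<in> A \<Longrightarrow> p \<in> ent f e) \<Longrightarrow> p \<in> bset A"
  unfolding bset_def by (rule InterI) blast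

lemma genI: "finite A \<Longrightarrow> A \<subseteq> F \<times> {0<..} \<Longrightarrow> bset A \<subseteq> E \<Longrightarrow> E \<in> gen F"
  unfolding gen_def by blast

lemma genE: "E \<in> gen F \<Longrightarrow> (\<And>A. finite A \<Longrightarrow> A \<subseteq> F \<times> {0<..} \<Longrightarrow> bset A \<subseteq> E \<Longrightarrow> P) \<Longrightarrow> P"
  unfolding gen_def by blast

lemma bset_pos: "A \<subseteq> F \<times> {0<..} \<Longrightarrow> (f, e) \<in> A \<Longrightarrow> e > 0"
  by blast

lemma Id_bset:
  fixes A :: "(('a \<Rightarrow> real) \<times> real) set"
  assumes A: "A \<subseteq> F \<times> {0<..}"
  shows "Id \<subseteq> bset A"
proof
  fix p :: "'a \<times> 'a" assume "p \<in> Id"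
  then obtain a where p: "p = (a, a)" by blast
  show "p \<in> bset A"
  proof (rule bset_intro)
    fix f e assume "(f, e) \<in> A"
    then have "e > 0" by (rule bset_pos[OF A])
    then show "p \<in> ent f e" unfolding p ent_def by simp
  qed
qed

lemma bset_Un: "bset (A \<union> B) = bset A \<inter> bset B"
  unfolding bset_def by (simp add: image_Un Inter_Un_distrib)

lemma bset_sym: "(a, b) \<in> bset A \<Longrightarrow> (b, a) \<in> bset A"
proof (rule bset_intro)
  fix f e assume "(a, b) \<in> bset A" "(f, e) \<in> A"
  then have "(a, b) \<in> ent f e" by (rule bset_mem[rotated])
  then show "(b, a) \<in> ent f e" by (simp add: ent_def dist_commute)
qed

lemma gen_unif: "is_uniformity (gen F)"
  unfolding is_uniformity_def
proof (intro conjI ballI allI impI)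
  show "UNIV \<in> gen F" by (rule genI[of "{}"]) simp_all
next
  fix E assume "E \<in> gen F"
  then show "Id \<subseteq> E"
  proof (rule genE)
    fix A assume "A \<subseteq> F \<times> {0<..}" "bset A \<subseteq> E"
    then show "Id \<subseteq> E" using Id_bset[of A F] by (rule_tac subset_trans) simp_all
  qed
next
  fix E G assume "E \<in> gen F" "E \<subseteq> G"
  from this(1) show "G \<in> gen F"
  proof (rule genE)
    fix A assume "finite A" "A \<subseteq> F \<times> {0<..}" "bset A \<subseteq> E"
    then show "G \<in> gen F" using \<open>E \<subseteq> G\<close> by (intro genI[of A]) simp_all
  qed
next
  fix E G assume E: "E \<in> gen F" and G: "G \<in> gen F"
  from E show "E \<inter> G \<in> gen F"
  proof (rule genE)
    fix A assume A: "finite A" "A \<subseteq> F \<times> {0<..}" "bset A \<subseteq> E"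
    from G show "E \<inter> G \<in> gen F"
    proof (rule genE)
      fix B assume B: "finite B" "B \<subseteq> F \<times> {0<..}" "bset B \<subseteq> G"
      show "E \<inter> G \<in> gen F"
      proof (rule genI[of "A \<union> B"])
        show "finite (A \<union> B)" using A(1) B(1) by simp
        show "A \<union> B \<subseteq> F \<times> {0<..}" using A(2) B(2) by (rule Un_least)
        show "bset (A \<union> B) \<subseteq> E \<inter> G" unfolding bset_Un using A(3) B(3) by (rule Int_mono)
      qed
    qed
  qed
next
  fix E assume "E \<in> gen F"
  then show "E\<inverse> \<in> gen F"
  proof (rule genE)
    fix A assume A: "finite A" "A \<subseteq> F \<times> {0<..}" "bset A \<subseteq> E"
    have "bset A \<subseteq> E\<inverse>"
    proof (rule subsetI)
      fix p assume p0: "p \<in> bset A"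
      obtain a b where p: "p = (a, b)" by force
      have "(b, a) \<in> bset A" using p0 unfolding p by (rule bset_sym)
      then have "(b, a) \<in> E" using A(3) by (rule subsetD[rotated])
      then show "p \<in> E\<inverse>" unfolding p by simp
    qed
    then show "E\<inverse> \<in> gen F" using A(1,2) by (intro genI[of A]) simp_all
  qed
next
  fix E assume "E \<in> gen F"
  then show "\<exists>D\<in>gen F. D O D \<subseteq> E"
  proof (rule genE)
  fix A assume A: "finite A" "A \<subseteq> F \<times> {0<..}" "bset A \<subseteq> E"
  define A' where "A' = (\<lambda>(f, e). (f, e / 2 :: real)) ` A"
  have fA: "finite A'" using A(1) by (simp add: A'_def)
  have sA: "A' \<subseteq> F \<times> {0<..}"
  proof
    fix x assume "x \<in> A'"
    then obtain f e where fe: "(f, e) \<in> A" "x = (f, e / 2)" unfolding A'_def by auto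
    then have "f \<in> F" "e > 0" using A(2) by auto
    then show "x \<in> F \<times> {0<..}" using fe(2) by simp
  qed
  have g: "bset A' \<in> gen F" using fA sA by (rule genI) simp
  have "bset A' O bset A' \<subseteq> E"
  proof
    fix p assume "p \<in> bset A' O bset A'"
    then obtain a b d where p: "p = (a, d)" "(a, b) \<in> bset A'" "(b, d) \<in> bset A'" by blast
    have "(a, d) \<in> bset A"
    proof (rule bset_intro)
      fix f e assume fe: "(f, e) \<in> A"
      have "(f, e/2) \<in> A'" using fe unfolding A'_def by (rule image_eqI[rotated]) simp
      then have "(a, b) \<in> ent f (e/2)" "(b, d) \<in> ent f (e/2)"
        using p(2,3) by (simp_all add: bset_mem)
      then have "dist (f a) (f b) < e/2" "dist (f b) (f d) < e/2" by (simp_all add: ent_def)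
      then have "dist (f a) (f d) < e" using dist_triangle[of "f a" "f d" "f b"] by linarith
      then show "(a, d) \<in> ent f e" by (simp add: ent_def)
    qed
    then show "p \<in> E" using A(3) p(1) by blast
  qed
  then show "\<exists>D\<in>gen F. D O D \<subseteq> E" using g by blast
  qed
qed

lemma gen_cont: "f \<in> F \<Longrightarrow> unif_cont f (gen F) eucl_unif"
  unfolding unif_cont_iff[OF gen_unif]
proof (intro allI impI)
  fix e :: real assume "f \<in> F" "e > 0"
  then show "ent f e \<in> gen F" unfolding gen_def
    by (intro CollectI exI[of _ "{(f, e)}"]) (auto simp: bset_def)
qed

lemma gen_least:
  assumes V: "is_uniformity V" and h: "\<forall>f\<in>F. unif_cont f V eucl_unif"
  shows "gen F \<subseteq> V"
proof
  fix E assume "E \<in> gen F"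
  then obtain A where A: "finite A" "A \<subseteq> F \<times> {0<..}" "bset A \<subseteq> E" unfolding gen_def by auto
  have "\<forall>(f, e)\<in>A. e > 0 \<and> ent f e \<in> V"
    using A(2) h unif_cont_iff[OF V] by auto
  then have "bset A \<in> V" using bset_in[OF V A(1)] by blast
  then show "E \<in> V" using A(3) V unfolding is_uniformity_def by blast
qed

lemma coarsest_gen: "coarsest_unif F = gen F"
  unfolding coarsest_unif_def
proof (rule the_equality)
  have g1: "is_uniformity (gen F)" by (rule gen_unif)
  have g2: "\<forall>f\<in>F. unif_cont f (gen F) eucl_unif" using gen_cont by blast
  have g3: "\<forall>V. is_uniformity V \<and> (\<forall>f\<in>F. unif_cont f V eucl_unif) \<longrightarrow> gen F \<subseteq> V"
    using gen_least by blast
  show "is_uniformity (gen F) \<and> (\<forall>f\<in>F. unif_cont f (gen F) eucl_unif) \<and>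
      (\<forall>V. is_uniformity V \<and> (\<forall>f\<in>F. unif_cont f V eucl_unif) \<longrightarrow> gen F \<subseteq> V)"
    using g1 g2 g3 by (intro conjI)
next
  fix U assume U: "is_uniformity U \<and> (\<forall>f\<in>F. unif_cont f U eucl_unif) \<and>
      (\<forall>V. is_uniformity V \<and> (\<forall>f\<in>F. unif_cont f V eucl_unif) \<longrightarrow> U \<subseteq> V)"
  then have U1: "is_uniformity U" and U2: "\<forall>f\<in>F. unif_cont f U eucl_unif"
    and U3: "\<forall>V. is_uniformity V \<and> (\<forall>f\<in>F. unif_cont f V eucl_unif) \<longrightarrow> U \<subseteq> V"
    by blast+
  have g2: "\<forall>f\<in>F. unif_cont f (gen F) eucl_unif" using gen_cont by blast
  have "U \<subseteq> gen F" using U3 gen_unif[of F] g2 by blast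
  moreover have "gen F \<subseteq> U" using gen_least[OF U1 U2] .
  ultimately show "U = gen F" by (rule subset_antisym)
qed

definition UCs :: "('x \<times> 'x) set set \<Rightarrow> ('x \<Rightarrow> real) set" where
  "UCs U = {h. unif_cont h U eucl_unif}"

definition Sf :: "'l set \<Rightarrow> ('x \<Rightarrow> 'bx) \<Rightarrow> (('x \<Rightarrow> real) \<Rightarrow> 'bx \<Rightarrow> 'br)
      \<Rightarrow> ('l \<Rightarrow> 'br \<Rightarrow> real) \<Rightarrow> ('x \<Rightarrow> real) set \<Rightarrow> ('x \<Rightarrow> real) set" where
  "Sf Lam c Bmap \<tau> F = {(\<lambda>s. \<tau> l (Bmap h (c s))) | l h. l \<in> Lam \<and> h \<in> F}"

definition Tf where "Tf Lam c Bmap \<tau> F = UCs (gen (Sf Lam c Bmap \<tau> F))"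

lemma gen_mono:
  assumes "F \<subseteq> G" shows "gen F \<subseteq> gen G"
proof (rule gen_least[OF gen_unif], rule ballI)
  fix f assume "f \<in> F"
  then have "f \<in> G" using assms by (rule subsetD[rotated])
  then show "unif_cont f (gen G) eucl_unif" by (rule gen_cont)
qed

lemma UCs_mono: "U \<subseteq> V \<Longrightarrow> UCs U \<subseteq> UCs V"
  unfolding UCs_def unif_cont_def by blast

lemma Sf_mono: "F \<subseteq> G \<Longrightarrow> Sf Lam c Bmap \<tau> F \<subseteq> Sf Lam c Bmap \<tau> G"
  unfolding Sf_def by blast

lemma Tf_mono: "mono (Tf Lam c Bmap \<tau>)"
proof (rule monoI)
  fix F G :: "('a \<Rightarrow> real) set" assume "F \<le> G"
  then show "Tf Lam c Bmap \<tau> F \<le> Tf Lam c Bmap \<tau> G"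
    unfolding Tf_def by (intro UCs_mono gen_mono Sf_mono)
qed

lemma Phi_eq: "Phi Lam c Bmap \<tau> U = gen (Sf Lam c Bmap \<tau> (UCs U))"
  unfolding Phi_def coarsest_gen Sf_def UCs_def by simp

lemma Tf_apply: "Tf Lam c Bmap \<tau> F = UCs (gen (Sf Lam c Bmap \<tau> F))"
  by (rule Tf_def)

lemma lfp_Tf: "UCs (gen (Sf Lam c Bmap \<tau> (lfp (Tf Lam c Bmap \<tau>)))) = lfp (Tf Lam c Bmap \<tau>)"
proof -
  have "Tf Lam c Bmap \<tau> (lfp (Tf Lam c Bmap \<tau>)) = lfp (Tf Lam c Bmap \<tau>)"
    by (rule lfp_fixpoint[OF Tf_mono])
  then show ?thesis by (simp only: Tf_apply)
qed

lemma lfp_fix_Phi: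
  "Phi Lam c Bmap \<tau> (gen (Sf Lam c Bmap \<tau> (lfp (Tf Lam c Bmap \<tau>)))) = gen (Sf Lam c Bmap \<tau> (lfp (Tf Lam c Bmap \<tau>)))"
  by (simp only: Phi_eq lfp_Tf)

lemma lfp_least_Phi:
  assumes V2: "Phi Lam c Bmap \<tau> V = V"
  shows "gen (Sf Lam c Bmap \<tau> (lfp (Tf Lam c Bmap \<tau>))) \<subseteq> V"
proof -
  have "Tf Lam c Bmap \<tau> (UCs V) = UCs (Phi Lam c Bmap \<tau> V)" by (simp only: Tf_apply Phi_eq)
  also have "\<dots> = UCs V" by (simp only: V2)
  finally have "lfp (Tf Lam c Bmap \<tau>) \<subseteq> UCs V" by (intro lfp_lowerbound equalityD1)
  then have "gen (Sf Lam c Bmap \<tau> (lfp (Tf Lam c Bmap \<tau>))) \<subseteq> gen (Sf Lam c Bmap \<tau> (UCs V))"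
    by (intro gen_mono Sf_mono)
  also have "gen (Sf Lam c Bmap \<tau> (UCs V)) = V" using V2 by (simp only: Phi_eq)
  finally show ?thesis .
qed

lemma bisim_eq: "bisim_unif Lam c Bmap \<tau> = gen (Sf Lam c Bmap \<tau> (lfp (Tf Lam c Bmap \<tau>)))"
  unfolding bisim_unif_def
proof (rule the_equality)
  let ?U = "gen (Sf Lam c Bmap \<tau> (lfp (Tf Lam c Bmap \<tau>)))"
  show "is_uniformity ?U \<and> Phi Lam c Bmap \<tau> ?U = ?U \<and>
        (\<forall>V. is_uniformity V \<and> Phi Lam c Bmap \<tau> V = V \<longrightarrow> V \<supseteq> ?U)"
  proof (intro conjI allI impI)
    show "is_uniformity ?U" by (rule gen_unif)
    show "Phi Lam c Bmap \<tau> ?U = ?U" by (rule lfp_fix_Phi)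
    fix V assume "is_uniformity V \<and> Phi Lam c Bmap \<tau> V = V"
    then show "?U \<subseteq> V" by (intro lfp_least_Phi) (erule conjE)
  qed
  fix U assume U: "is_uniformity U \<and> Phi Lam c Bmap \<tau> U = U \<and>
        (\<forall>V. is_uniformity V \<and> Phi Lam c Bmap \<tau> V = V \<longrightarrow> V \<supseteq> U)"
  have U2: "Phi Lam c Bmap \<tau> U = U" using U by (elim conjE)
  have U3: "\<forall>V. is_uniformity V \<and> Phi Lam c Bmap \<tau> V = V \<longrightarrow> V \<supseteq> U" using U by (elim conjE)
  have "U \<subseteq> ?U" using U3 by (rule allE) (erule mp, intro conjI gen_unif lfp_fix_Phi)
  moreover have "?U \<subseteq> U" using U2 by (rule lfp_least_Phi)
  ultimately show "U = ?U" by (rule subset_antisym)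
qed

lemma unif_UNIV: "is_uniformity V \<Longrightarrow> UNIV \<in> V"
  unfolding is_uniformity_def by (elim conjE)

lemma unif_up:
  assumes "is_uniformity V" "E \<in> V" "E \<subseteq> G" shows "G \<in> V"
proof -
  have "\<forall>E\<in>V. \<forall>F. E \<subseteq> F \<longrightarrow> F \<in> V" using assms(1) unfolding is_uniformity_def by (elim conjE)
  then show ?thesis using assms(2,3) by blast
qed

lemma unif_Int:
  assumes "is_uniformity V" "E \<in> V" "G \<in> V" shows "E \<inter> G \<in> V"
proof -
  have "\<forall>E\<in>V. \<forall>F\<in>V. E \<inter> F \<in> V" using assms(1) unfolding is_uniformity_def by (elim conjE)
  then show ?thesis using assms(2,3) by blast
qed

lemma sem_uc:
  assumes V: "is_uniformity V" and fp: "Phi Lam c Bmap \<tau> V = V"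
  shows "set_form \<phi> \<subseteq> Lam \<Longrightarrow> unif_cont (sem c Bmap \<tau> \<phi>) V eucl_unif"
proof (induction \<phi>)
  case FOne
  show ?case unfolding unif_cont_iff[OF V]
  proof (intro allI impI)
    fix e :: real assume "e > 0"
    then have "ent (sem c Bmap \<tau> FOne) e = UNIV" by (auto simp: ent_def)
    then show "ent (sem c Bmap \<tau> FOne) e \<in> V" using unif_UNIV[OF V] by simp
  qed
next
  case (FMin \<phi>1 \<phi>2)
  show ?case unfolding unif_cont_iff[OF V]
  proof (intro allI impI)
    fix e :: real assume e: "e > 0"
    have "ent (sem c Bmap \<tau> \<phi>1) e \<in> V" "ent (sem c Bmap \<tau> \<phi>2) e \<in> V"
      using FMin e unif_cont_iff[OF V] by auto
    then have i: "ent (sem c Bmap \<tau> \<phi>1) e \<inter> ent (sem c Bmap \<tau> \<phi>2) e \<in> V"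
      by (intro unif_Int[OF V])
    have "ent (sem c Bmap \<tau> \<phi>1) e \<inter> ent (sem c Bmap \<tau> \<phi>2) e \<subseteq> ent (sem c Bmap \<tau> (FMin \<phi>1 \<phi>2)) e"
      by (auto simp: ent_def dist_real_def min_def)
    then show "ent (sem c Bmap \<tau> (FMin \<phi>1 \<phi>2)) e \<in> V"
      by (rule unif_up[OF V i])
  qed
next
  case (FPlus r \<phi>)
  then have "unif_cont (sem c Bmap \<tau> \<phi>) V eucl_unif" by simp
  moreover have "ent (sem c Bmap \<tau> (FPlus r \<phi>)) e = ent (sem c Bmap \<tau> \<phi>) e" for e
    by (simp add: ent_def dist_real_def)
  ultimately show ?case unfolding unif_cont_iff[OF V] by simp
next
  case (FTimes r \<phi>)
  show ?case unfolding unif_cont_iff[OF V]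
  proof (intro allI impI)
    fix e :: real assume e: "e > 0"
    have p: "e / (\<bar>r\<bar> + 1) > 0" using e by simp
    have "ent (sem c Bmap \<tau> \<phi>) (e / (\<bar>r\<bar> + 1)) \<in> V"
      using FTimes p unif_cont_iff[OF V] by auto
    moreover have "ent (sem c Bmap \<tau> \<phi>) (e / (\<bar>r\<bar> + 1)) \<subseteq> ent (sem c Bmap \<tau> (FTimes r \<phi>)) e"
    proof clarify
      fix a b assume "(a, b) \<in> ent (sem c Bmap \<tau> \<phi>) (e / (\<bar>r\<bar> + 1))"
      then have d: "\<bar>sem c Bmap \<tau> \<phi> a - sem c Bmap \<tau> \<phi> b\<bar> < e / (\<bar>r\<bar> + 1)"
        by (simp add: ent_def dist_real_def)
      have "\<bar>r * sem c Bmap \<tau> \<phi> a - r * sem c Bmap \<tau> \<phi> b\<bar> = \<bar>r\<bar> * \<bar>sem c Bmap \<tau> \<phi> a - sem c Bmap \<tau> \<phi> b\<bar>"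
        by (simp only: right_diff_distrib[symmetric] abs_mult)
      also have "\<dots> \<le> (\<bar>r\<bar> + 1) * \<bar>sem c Bmap \<tau> \<phi> a - sem c Bmap \<tau> \<phi> b\<bar>"
        by (intro mult_right_mono) auto
      also have "\<dots> < (\<bar>r\<bar> + 1) * (e / (\<bar>r\<bar> + 1))"
        using d by (intro mult_strict_left_mono) auto
      also have "\<dots> = e" by simp
      finally show "(a, b) \<in> ent (sem c Bmap \<tau> (FTimes r \<phi>)) e"
        by (simp add: ent_def dist_real_def)
    qed
    ultimately show "ent (sem c Bmap \<tau> (FTimes r \<phi>)) e \<in> V"
      by (rule unif_up[OF V])
  qed
next
  case (FHeart l \<phi>)
  then have "l \<in> Lam" "sem c Bmap \<tau> \<phi> \<in> UCs V" by (auto simp: UCs_def)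
  then have "sem c Bmap \<tau> (FHeart l \<phi>) \<in> Sf Lam c Bmap \<tau> (UCs V)"
    unfolding Sf_def by auto
  then have "unif_cont (sem c Bmap \<tau> (FHeart l \<phi>)) (Phi Lam c Bmap \<tau> V) eucl_unif"
    unfolding Phi_eq by (rule gen_cont)
  then show ?case using fp by simp
qed

theorem mainTheorem11:
  fixes Lam :: "'l set"
    and \<tau> :: "'l \<Rightarrow> 'br \<Rightarrow> real"
    and Bmap :: "('x \<Rightarrow> real) \<Rightarrow> 'bx \<Rightarrow> 'br"
    and c :: "'x \<Rightarrow> 'bx"
  shows "logical_unif Lam c Bmap \<tau> \<subseteq> bisim_unif Lam c Bmap \<tau> \<and>
         (\<forall>\<phi>. set_form \<phi> \<subseteq> Lam \<longrightarrow>
            unif_cont (sem c Bmap \<tau> \<phi>) (bisim_unif Lam c Bmap \<tau>) eucl_unif)"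
proof -
  let ?U = "gen (Sf Lam c Bmap \<tau> (lfp (Tf Lam c Bmap \<tau>)))"
  have V: "is_uniformity ?U" by (rule gen_unif)
  have P: "Phi Lam c Bmap \<tau> ?U = ?U" by (rule lfp_fix_Phi)
  have all: "\<forall>\<phi>. set_form \<phi> \<subseteq> Lam \<longrightarrow> unif_cont (sem c Bmap \<tau> \<phi>) ?U eucl_unif"
    using sem_uc[OF V P] by blast
  have "logical_unif Lam c Bmap \<tau> \<subseteq> ?U"
    unfolding logical_unif_def coarsest_gen
  proof (rule gen_least[OF V], rule ballI)
    fix f assume "f \<in> {sem c Bmap \<tau> \<phi> |\<phi>. set_form \<phi> \<subseteq> Lam}"
    then obtain \<phi> where "f = sem c Bmap \<tau> \<phi>" "set_form \<phi> \<subseteq> Lam" by blast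
    then show "unif_cont f ?U eucl_unif" using all by simp
  qed
  then show ?thesis using all unfolding bisim_eq by (intro conjI)
qed

end
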